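(* Let $p$ be a prime, $q=p^r$, $\mathscr{C}\subseteq\mathbb{F}_q^n$ a linear code of dimension $k$ and $\mathscr{D}\subseteq\mathbb{F}_{q^k}^m$ a linear code of dimension $s$ with $0<s<m$ such that for every $1\le i\le m$ some codeword of $\mathscr{D}$ has $i$-th coordinate equal to $1$. Let $H$ and $H'$ be $\mathrm{BH}(q^k,p)$ matrices with rows indexed by $\mathbb{F}_{q^k}$ and columns indexed by $\mathscr{C}$. If $Q_H(\mathscr{C},\mathscr{D})=Q_{H'}(\mathscr{C},\mathscr{D})$, then $H$ and $H'$ are row-equivalent. Conversely, if $\mathscr{D}=\{(\lambda,\ldots,\lambda):\lambda\in\mathbb{F}_{q^k}\}\subseteq\mathbb{F}_{q^k}^m$ and $H,H'$ are row-equivalent, then $Q_H(\mathscr{C},\mathscr{D})=Q_{H'}(\mathscr{C},\mathscr{D})$.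
   Context: $\zeta=e^{2\pi i/p}$. A $\mathrm{BH}(q^k,p)$ matrix is a $q^k\times q^k$ matrix with entries $p$-th roots of unity with $HH^\dagger=q^kI$. Such a matrix with rows indexed by $\mathbb{F}_{q^k}$ and columns by $\mathscr{C}$ can be written $H=[\zeta^{f_\lambda(\mathbf{c})}]_{\lambda\in\mathbb{F}_{q^k},\mathbf{c}\in\mathscr{C}}$ for functions $f_\lambda:\mathscr{C}\to\mathbb{F}_p$. Set $\phi_\lambda=q^{-k/2}\sum_{\mathbf{c}\in\mathscr{C}}\zeta^{f_\lambda(\mathbf{c})}|\mathbf{c}\rangle\in(\mathbb{C}^q)^{\otimes n}$ (where $(\mathbb{C}^q)^{\otimes n}$ has orthonormal basis $|\mathbf{x}\rangle$, $\mathbf{x}\in\mathbb{F}_q^n$), $\Phi_\Lambda=\phi_{\lambda_1}\otimes\cdots\otimes\phi_{\lambda_m}$ for $\Lambda=(\lambda_1,\ldots,\lambda_m)$, and $Q_H(\mathscr{C},\mathscr{D})=\operatorname{span}\{\Phi_\Lambda:\Lambda\in\mathscr{D}\}$. Two such matrices are row-equivalent if one is obtained from the other by permuting rows and multiplying rows by $p$-th roots of unity. *)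

theory Defs
  imports "HOL-Analysis.Analysis"
begin

definition linear_code :: "('a::{field,finite}^'n) set \<Rightarrow> nat \<Rightarrow> bool" where
  "linear_code C k \<longleftrightarrow> vec.subspace C \<and> vec.dim C = k"

text \<open>A BH(N,p) matrix with rows indexed by the type 'b and columns indexed by the set C
  (only the entries H lam c with c in C matter): entries are p-th roots of unity and
  H H^dagger = N I.\<close>

definition is_BH :: "nat \<Rightarrow> nat \<Rightarrow> 'c set \<Rightarrow> ('b::finite \<Rightarrow> 'c \<Rightarrow> complex) \<Rightarrow> bool" where
  "is_BH N p C H \<longleftrightarrow>
     (\<forall>lam. \<forall>c\<in>C. H lam c ^ p = 1) \<and>
     (\<forall>lam mu. (\<Sum>c\<in>C. H lam c * cnj (H mu c)) = (if lam = mu then of_nat N else 0))"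

definition row_equiv :: "nat \<Rightarrow> 'c set \<Rightarrow> ('b \<Rightarrow> 'c \<Rightarrow> complex) \<Rightarrow> ('b \<Rightarrow> 'c \<Rightarrow> complex) \<Rightarrow> bool" where
  "row_equiv p C H H' \<longleftrightarrow>
     (\<exists>\<sigma> w. bij \<sigma> \<and> (\<forall>lam. w lam ^ p = 1) \<and>
        (\<forall>lam. \<forall>c\<in>C. H' lam c = w lam * H (\<sigma> lam) c))"

text \<open>phi_lam in (C^q)^{\<otimes> n}, written as a coefficient function on the basis |x>, x in F_q^n:
  phi_lam = q^{-k/2} \<Sum>_{c\<in>C} H lam c |c>.  Here N = q^k.\<close>

definition phi :: "nat \<Rightarrow> ('a^'n) set \<Rightarrow> ('b \<Rightarrow> 'a^'n \<Rightarrow> complex) \<Rightarrow> 'b \<Rightarrow> 'a^'n \<Rightarrow> complex" where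
  "phi N C H lam x = (if x \<in> C then complex_of_real (1 / sqrt (real N)) * H lam x else 0)"

text \<open>Phi_Lam = phi_{lam_1} \<otimes> ... \<otimes> phi_{lam_m}, as a coefficient function on the
  product basis |x_1> \<otimes> ... \<otimes> |x_m> of ((C^q)^{\<otimes> n})^{\<otimes> m}.\<close>

definition Phi :: "nat \<Rightarrow> ('a^'n) set \<Rightarrow> ('b \<Rightarrow> 'a^'n \<Rightarrow> complex) \<Rightarrow> 'b^'m \<Rightarrow> ('m::finite \<Rightarrow> 'a^'n) \<Rightarrow> complex" where
  "Phi N C H Lam X = (\<Prod>j\<in>UNIV. phi N C H (Lam $ j) (X j))"

definition QH :: "nat \<Rightarrow> ('a^'n) set \<Rightarrow> ('b \<Rightarrow> 'a^'n \<Rightarrow> complex) \<Rightarrow> ('b^'m) set \<Rightarrow> (('m::finite \<Rightarrow> 'a^'n) \<Rightarrow> complex) set" where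
  "QH N C H D = {(\<lambda>X. \<Sum>Lam\<in>D. a Lam * Phi N C H Lam X) | a. True}"

end

theory Submission
  imports Defs
begin


lemma sum_prod_fun:
  fixes f :: "'m::finite \<Rightarrow> 'c::finite \<Rightarrow> complex"
  shows "(\<Sum>X\<in>UNIV. \<Prod>j\<in>UNIV. f j (X j)) = (\<Prod>j\<in>UNIV. \<Sum>x\<in>UNIV. f j x)"
  using prod_sum_PiE[of "UNIV::'m set" "\<lambda>_. UNIV::'c set" f] by simp

definition ip1 :: "('x::finite \<Rightarrow> complex) \<Rightarrow> ('x \<Rightarrow> complex) \<Rightarrow> complex" where
  "ip1 f g = (\<Sum>x\<in>UNIV. cnj (f x) * g x)"

lemma ip_Phi:
  fixes H G :: "'b \<Rightarrow> 'a::finite^'n \<Rightarrow> complex" and M L :: "'b^'m::finite"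
  shows "ip1 (Phi N C H M) (Phi N C G L) = (\<Prod>j\<in>UNIV. ip1 (phi N C H (M$j)) (phi N C G (L$j)))"
proof -
  have "ip1 (Phi N C H M) (Phi N C G L) =
     (\<Sum>X\<in>UNIV. \<Prod>j\<in>UNIV. cnj (phi N C H (M$j) (X j)) * phi N C G (L$j) (X j))"
    unfolding ip1_def Phi_def by (simp add: prod.distrib)
  also have "\<dots> = (\<Prod>j\<in>UNIV. ip1 (phi N C H (M$j)) (phi N C G (L$j)))"
    unfolding ip1_def by (rule sum_prod_fun)
  finally show ?thesis .
qed

lemma ip_phi:
  assumes "N > 0"
  shows "ip1 (phi N C H mu) (phi N C G lam) = (\<Sum>c\<in>C. cnj (H mu c) * G lam c) / of_nat N"
proof -
  have "ip1 (phi N C H mu) (phi N C G lam) = (\<Sum>x\<in>C. cnj (complex_of_real (1 / sqrt (real N)) * H mu x) * (complex_of_real (1 / sqrt (real N)) * G lam x))"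
  proof -
    let ?g = "\<lambda>x. cnj (complex_of_real (1 / sqrt (real N)) * H mu x) * (complex_of_real (1 / sqrt (real N)) * G lam x)"
    have "ip1 (phi N C H mu) (phi N C G lam) = (\<Sum>x\<in>UNIV. if x \<in> C then ?g x else 0)"
      unfolding ip1_def phi_def by (rule sum.cong) auto
    also have "\<dots> = sum ?g (UNIV \<inter> C)" by (rule sum.inter_restrict[symmetric]) simp
    finally show ?thesis by simp
  qed
  also have "\<dots> = (\<Sum>c\<in>C. cnj (H mu c) * G lam c) / of_nat N"
  proof -
    have c2: "cnj (complex_of_real r * z) * (complex_of_real r * w) = cnj z * w * complex_of_real (r*r)" for z w r
      by (simp add: algebra_simps)
    have rr: "1 / sqrt (real N) * (1 / sqrt (real N)) = 1 / real N"
    proof -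
      have "sqrt (real N) * sqrt (real N) = real N" by simp
      then show ?thesis by (metis divide_divide_eq_left div_by_1 times_divide_eq_right mult_1_right)
    qed
    have "(\<Sum>x\<in>C. cnj (complex_of_real (1 / sqrt (real N)) * H mu x) * (complex_of_real (1 / sqrt (real N)) * G lam x))
       = (\<Sum>x\<in>C. cnj (H mu x) * G lam x) * complex_of_real (1 / real N)"
      unfolding c2 rr by (simp add: sum_distrib_right sum_divide_distrib)
    also have "\<dots> = (\<Sum>c\<in>C. cnj (H mu c) * G lam c) / of_nat N"
      by (simp add: divide_inverse of_real_inverse)
    finally show ?thesis .
  qed
  finally show ?thesis .
qed

lemma ip_phi_self:
  assumes "N > 0" "is_BH N p C H"
  shows "ip1 (phi N C H mu) (phi N C H lam) = (if mu = lam then 1 else 0)"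
proof -
  have "(\<Sum>c\<in>C. cnj (H mu c) * H lam c) = cnj (\<Sum>c\<in>C. H mu c * cnj (H lam c))"
    by (simp add: mult.commute)
  also have "\<dots> = (if mu = lam then of_nat N else 0)" using assms(2) unfolding is_BH_def by simp
  finally show ?thesis using assms(1) by (simp add: ip_phi)
qed

lemma ip_Phi_self:
  assumes "N > 0" "is_BH N p C H"
  shows "ip1 (Phi N C H M) (Phi N C H L) = (if M = L then 1 else 0)"
proof (cases "M = L")
  case True
  then show ?thesis unfolding ip_Phi ip_phi_self[OF assms] by simp
next
  case False
  then obtain j where "M $ j \<noteq> L $ j" by (auto simp: vec_eq_iff)
  then have "\<exists>j\<in>UNIV. ip1 (phi N C H (M$j)) (phi N C H (L$j)) = 0"
    unfolding ip_phi_self[OF assms] by auto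
  then show ?thesis unfolding ip_Phi using False by (simp add: prod_zero_iff)
qed



lemma QH_vec:
  fixes H :: "'b::finite \<Rightarrow> 'a::finite^'n \<Rightarrow> complex"
  shows "QH N C H (range (vec :: 'b \<Rightarrow> 'b^'m::finite)) =
    {(\<lambda>X. \<Sum>mu\<in>UNIV. b mu * Phi N C H (vec mu :: 'b^'m) X) | b. True}"
proof -
  have inj: "inj (vec :: 'b \<Rightarrow> 'b^'m)" by (simp add: inj_def vec_eq_iff)
  have r: "(\<Sum>L\<in>range (vec :: 'b \<Rightarrow> 'b^'m). a L * Phi N C H L X) = (\<Sum>mu\<in>UNIV. a (vec mu) * Phi N C H (vec mu) X)" for a X
    by (simp add: sum.reindex[OF inj])
  show ?thesis
  proof (rule set_eqI, rule iffI)
    fix F assume "F \<in> QH N C H (range (vec :: 'b \<Rightarrow> 'b^'m))"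
    then obtain a where "F = (\<lambda>X. \<Sum>L\<in>range (vec :: 'b \<Rightarrow> 'b^'m). a L * Phi N C H L X)"
      unfolding QH_def mem_Collect_eq by blast
    then show "F \<in> {(\<lambda>X. \<Sum>mu\<in>UNIV. b mu * Phi N C H (vec mu :: 'b^'m) X) | b. True}"
      unfolding r mem_Collect_eq by (intro exI[of _ "\<lambda>mu. a (vec mu)"]) simp
  next
    fix F assume "F \<in> {(\<lambda>X. \<Sum>mu\<in>UNIV. b mu * Phi N C H (vec mu :: 'b^'m) X) | b. True}"
    then obtain b where F: "F = (\<lambda>X. \<Sum>mu\<in>UNIV. b mu * Phi N C H (vec mu :: 'b^'m) X)" by blast
    define a where "a = (\<lambda>L::'b^'m. b (L $ undefined))"
    have "F = (\<lambda>X. \<Sum>L\<in>range (vec :: 'b \<Rightarrow> 'b^'m). a L * Phi N C H L X)"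
      unfolding r F a_def by simp
    then show "F \<in> QH N C H (range (vec :: 'b \<Rightarrow> 'b^'m))" unfolding QH_def mem_Collect_eq by (intro exI[of _ a]) simp
  qed
qed

lemma QH_vec_sub:
  fixes H G :: "'b::finite \<Rightarrow> 'a::finite^'n \<Rightarrow> complex"
  assumes bij: "bij \<sigma>" and w: "\<And>lam x. phi N C G lam x = w lam * phi N C H (\<sigma> lam) x"
  shows "QH N C G (range (vec :: 'b \<Rightarrow> 'b^'m::finite)) \<subseteq> QH N C H (range (vec :: 'b \<Rightarrow> 'b^'m))"
proof
  fix F assume "F \<in> QH N C G (range (vec :: 'b \<Rightarrow> 'b^'m))"
  then obtain b where F: "F = (\<lambda>X. \<Sum>mu\<in>UNIV. b mu * Phi N C G (vec mu :: 'b^'m) X)"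
    unfolding QH_vec mem_Collect_eq by blast
  have P: "Phi N C G (vec lam :: 'b^'m) X = w lam ^ CARD('m) * Phi N C H (vec (\<sigma> lam) :: 'b^'m) X" for lam X
    unfolding Phi_def w by (simp add: prod.distrib)
  have inj: "inj \<sigma>" using bij bij_is_inj by blast
  have su: "surj \<sigma>" using bij bij_is_surj by blast
  define c where "c = (\<lambda>mu. b (inv \<sigma> mu) * w (inv \<sigma> mu) ^ CARD('m))"
  have "(\<Sum>mu\<in>UNIV. c mu * Phi N C H (vec mu :: 'b^'m) X) = (\<Sum>lam\<in>UNIV. c (\<sigma> lam) * Phi N C H (vec (\<sigma> lam) :: 'b^'m) X)" for X
    using sum.reindex[OF inj, of "\<lambda>mu. c mu * Phi N C H (vec mu :: 'b^'m) X"] su by simp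
  also have "\<dots> X = (\<Sum>lam\<in>UNIV. b lam * Phi N C G (vec lam :: 'b^'m) X)" for X
    unfolding c_def P inv_f_f[OF inj] by (simp add: mult_ac)
  finally have "F = (\<lambda>X. \<Sum>mu\<in>UNIV. c mu * Phi N C H (vec mu :: 'b^'m) X)" unfolding F by simp
  then show "F \<in> QH N C H (range (vec :: 'b \<Rightarrow> 'b^'m))" unfolding QH_vec mem_Collect_eq by (intro exI[of _ c]) simp
qed

lemma part2:
  fixes H G :: "'b::finite \<Rightarrow> 'a::finite^'n \<Rightarrow> complex"
  assumes "prime p" "row_equiv p C H G"
  shows "QH N C H (range (vec :: 'b \<Rightarrow> 'b^'m::finite)) = QH N C G (range (vec :: 'b \<Rightarrow> 'b^'m))"
proof -
  obtain \<sigma> w where b: "bij \<sigma>" and wp: "\<And>lam. w lam ^ p = 1" and e: "\<And>lam c. c \<in> C \<Longrightarrow> G lam c = w lam * H (\<sigma> lam) c"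
    using assms(2) unfolding row_equiv_def by blast
  have p0: "p > 0" using assms(1) prime_gt_0_nat by blast
  have wnz: "w lam \<noteq> 0" for lam
  proof
    assume "w lam = 0" then have "w lam ^ p = 0" using p0 by simp
    then show False using wp[of lam] by simp
  qed
  have e1: "phi N C G lam x = w lam * phi N C H (\<sigma> lam) x" for lam x
    unfolding phi_def using e by (simp add: mult_ac)
  have e2: "phi N C H mu x = (1 / w (inv \<sigma> mu)) * phi N C G (inv \<sigma> mu) x" for mu x
  proof -
    have s1: "\<sigma> (inv \<sigma> mu) = mu" using b by (simp add: bij_is_surj surj_f_inv_f)
    have "phi N C G (inv \<sigma> mu) x = w (inv \<sigma> mu) * phi N C H mu x" using e1[of "inv \<sigma> mu" x] s1 by simp
    then show ?thesis using wnz[of "inv \<sigma> mu"] by simp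
  qed
  have bi: "bij (inv \<sigma>)" using b bij_imp_bij_inv by blast
  show ?thesis
    by (rule subset_antisym[OF QH_vec_sub[OF bi e2] QH_vec_sub[OF b e1]])
qed



lemma sum_ind: "finite D \<Longrightarrow> L \<in> D \<Longrightarrow> (\<Sum>M\<in>D. (if M = L then 1 else 0) * f M) = (f L :: complex)"
proof -
  assume "finite D" "L \<in> D"
  have "(\<Sum>M\<in>D. (if M = L then 1 else 0) * f M) = (\<Sum>M\<in>D. if M = L then f M else 0)"
    by (rule sum.cong) auto
  then show ?thesis using \<open>finite D\<close> \<open>L \<in> D\<close> by (simp add: sum.delta')
qed
lemma sum_ind2: "finite D \<Longrightarrow> (\<Sum>M\<in>D. a M * (if L = M then 1 else 0)) = (if L \<in> D then a L else (0::complex))"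
proof -
  assume "finite D"
  have "(\<Sum>M\<in>D. a M * (if L = M then 1 else 0)) = (\<Sum>M\<in>D. if L = M then a M else 0)"
    by (rule sum.cong) auto
  then show ?thesis using \<open>finite D\<close> by (simp add: sum.delta)
qed
lemma ip1_sum_right:
  "ip1 F (\<lambda>X. \<Sum>M\<in>D. a M * f M X) = (\<Sum>M\<in>D. a M * ip1 F (f M))"
proof -
  have "ip1 F (\<lambda>X. \<Sum>M\<in>D. a M * f M X) = (\<Sum>X\<in>UNIV. \<Sum>M\<in>D. a M * (cnj (F X) * f M X))"
    unfolding ip1_def by (simp add: sum_distrib_left mult_ac)
  also have "\<dots> = (\<Sum>M\<in>D. \<Sum>X\<in>UNIV. a M * (cnj (F X) * f M X))" by (rule sum.swap)
  also have "\<dots> = (\<Sum>M\<in>D. a M * ip1 F (f M))" unfolding ip1_def by (simp add: sum_distrib_left)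
  finally show ?thesis .
qed

lemma ip1_cnj: "ip1 g f = cnj (ip1 f g)"
  unfolding ip1_def by (simp add: mult.commute)

lemma BH_nz: "is_BH N p C H \<Longrightarrow> p > 0 \<Longrightarrow> c \<in> C \<Longrightarrow> H lam c \<noteq> 0"
proof
  assume "is_BH N p C H" "p > 0" "c \<in> C" "H lam c = 0"
  then have "H lam c ^ p = 1" unfolding is_BH_def by blast
  moreover have "H lam c ^ p = 0" using \<open>H lam c = 0\<close> \<open>p > 0\<close> by simp
  ultimately show False by simp
qed

lemma exists_axis_notin:
  fixes D :: "('b::{field,finite}^'m::finite) set"
  assumes "vec.subspace D" "vec.dim D < CARD('m)"
  shows "\<exists>j. axis j 1 \<notin> D"
proof (rule ccontr)
  assume "\<not> ?thesis"
  then have "cart_basis \<subseteq> D" unfolding cart_basis_def by auto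
  then have "vec.span cart_basis \<subseteq> D" using assms(1) vec.span_minimal by blast
  then have "D = UNIV" by auto
  then show False using assms(2) vec_dim_card[where 'a='b and 'n='m] by simp
qed

lemma part1:
  fixes H G :: "'b::{field,finite} \<Rightarrow> 'a::{field,finite}^'n \<Rightarrow> complex"
    and D :: "('b^'m::finite) set"
  assumes N0: "N > 0" and pp: "prime p" and C0: "0 \<in> C"
    and BH: "is_BH N p C H" and BG: "is_BH N p C G"
    and Dsub: "vec.subspace D" and Ddim: "vec.dim D < CARD('m)"
    and Dhit: "\<forall>i. \<exists>d\<in>D. d $ i = 1"
    and QQ: "QH N C H D = QH N C G D"
  shows "row_equiv p C H G"
proof -
  have p0: "p > 0" using pp prime_gt_0_nat by blast
  define U where "U = (\<lambda>mu lam. ip1 (phi N C H mu) (phi N C G lam))"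
  have UP: "ip1 (Phi N C H M) (Phi N C G L) = (\<Prod>j\<in>UNIV. U (M$j) (L$j))" for M L :: "'b^'m"
    unfolding U_def by (rule ip_Phi)
  have onb: "ip1 (Phi N C H M) (Phi N C H L) = (if M = L then 1 else 0)" for M L :: "'b^'m"
    by (rule ip_Phi_self[OF N0 BH])
  have onbG: "ip1 (Phi N C G L) (Phi N C G L) = 1" for L :: "'b^'m"
    using ip_Phi_self[OF N0 BG, of L L] by simp
  have fD: "finite D" by simp
  have stepA: "\<exists>a. Phi N C G L = (\<lambda>X. \<Sum>M\<in>D. a M * Phi N C H M X)" if "L \<in> D" for L
  proof -
    have "(\<lambda>X. \<Sum>M\<in>D. (if M = L then 1 else 0) * Phi N C G M X) \<in> QH N C G D"
      unfolding QH_def mem_Collect_eq by (rule exI[of _ "\<lambda>M. if M = L then 1 else 0"]) simp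
    moreover have "(\<lambda>X. \<Sum>M\<in>D. (if M = L then 1 else 0) * Phi N C G M X) = Phi N C G L"
      using that sum_ind[OF fD that, of "\<lambda>M. Phi N C G M _"] by auto
    ultimately have "Phi N C G L \<in> QH N C H D" using QQ by simp
    then show ?thesis unfolding QH_def mem_Collect_eq by simp
  qed
  have coef: "ip1 (Phi N C H M') (Phi N C G L) = (if M' \<in> D then a M' else 0)"
    if "Phi N C G L = (\<lambda>X. \<Sum>M\<in>D. a M * Phi N C H M X)" for L M' :: "'b^'m" and a
  proof -
    have "ip1 (Phi N C H M') (Phi N C G L) = (\<Sum>M\<in>D. a M * (if M' = M then 1 else 0))"
      unfolding that ip1_sum_right onb ..
    also have "\<dots> = (if M' \<in> D then a M' else 0)"
      by (rule sum_ind2[OF fD])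
    finally show ?thesis .
  qed
  have stepB: "(\<Prod>j\<in>UNIV. U (M$j) (L$j)) = 0" if LD: "L \<in> D" and MD: "M \<notin> D" for L M
  proof -
    obtain a where a: "Phi N C G L = (\<lambda>X. \<Sum>M\<in>D. a M * Phi N C H M X)"
      using stepA[OF LD] by blast
    have "ip1 (Phi N C H M) (Phi N C G L) = 0" using coef[OF a, of M] MD by simp
    then show ?thesis using UP[of M L] by simp
  qed
  have stepC: "\<exists>M\<in>D. \<forall>j. U (M$j) (L$j) \<noteq> 0" if LD: "L \<in> D" for L
  proof (rule ccontr)
    assume nc: "\<not> ?thesis"
    obtain a where a: "Phi N C G L = (\<lambda>X. \<Sum>M\<in>D. a M * Phi N C H M X)"
      using stepA[OF LD] by blast
    have z: "ip1 (Phi N C G L) (Phi N C H M) = 0" if MD: "M \<in> D" for M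
    proof -
      obtain j where "U (M$j) (L$j) = 0" using nc MD by blast
      then have "ip1 (Phi N C H M) (Phi N C G L) = 0" unfolding UP
        by (simp add: prod_zero_iff) blast
      then show ?thesis by (subst ip1_cnj) simp
    qed
    have "1 = ip1 (Phi N C G L) (Phi N C G L)" using onbG by simp
    also have "\<dots> = (\<Sum>M\<in>D. a M * ip1 (Phi N C G L) (Phi N C H M))"
      by (subst (2) a) (rule ip1_sum_right)
    also have "\<dots> = 0" using z by simp
    finally show False by simp
  qed
  obtain j0 where j0: "axis j0 1 \<notin> D" using exists_axis_notin[OF Dsub Ddim] by blast
  obtain d where d: "d \<in> D" "d $ j0 = 1" using Dhit by blast
  define Lof where "Lof = (\<lambda>lam. lam *s d)"
  have LofD: "Lof lam \<in> D" for lam unfolding Lof_def using vec.subspace_scale[OF Dsub d(1)] by simp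
  have Lofj: "Lof lam $ j0 = lam" for lam unfolding Lof_def using d(2) by simp
  have Uex: "\<exists>mu. U mu lam \<noteq> 0" for lam
  proof -
    obtain M where M: "M \<in> D" "\<forall>j. U (M$j) (Lof lam $ j) \<noteq> 0" using stepC[OF LofD[of lam]] by blast
    have "U (M$j0) (Lof lam $ j0) \<noteq> 0" using M(2) by blast
    then show ?thesis unfolding Lofj by blast
  qed
  have Uuniq: "mu1 = mu2" if u1: "U mu1 lam \<noteq> 0" and u2: "U mu2 lam \<noteq> 0" for mu1 mu2 lam
  proof (rule ccontr)
    assume ne: "mu1 \<noteq> mu2"
    obtain M where M: "M \<in> D" "\<forall>j. U (M$j) (Lof lam $ j) \<noteq> 0" using stepC[OF LofD[of lam]] by blast
    define M1 where "M1 = (\<chi> j. if j = j0 then mu1 else M$j)"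
    define M2 where "M2 = (\<chi> j. if j = j0 then mu2 else M$j)"
    have "(\<Prod>j\<in>UNIV. U (M1$j) (Lof lam $ j)) \<noteq> 0"
      unfolding M1_def using M(2) u1 Lofj by (simp add: prod_zero_iff)
    then have M1D: "M1 \<in> D" using stepB[OF LofD[of lam]] by blast
    have "(\<Prod>j\<in>UNIV. U (M2$j) (Lof lam $ j)) \<noteq> 0"
      unfolding M2_def using M(2) u2 Lofj by (simp add: prod_zero_iff)
    then have M2D: "M2 \<in> D" using stepB[OF LofD[of lam]] by blast
    have "M1 - M2 \<in> D" using vec.subspace_diff[OF Dsub M1D M2D] .
    then have "inverse (mu1 - mu2) *s (M1 - M2) \<in> D" using vec.subspace_scale[OF Dsub] by blast
    moreover have "inverse (mu1 - mu2) *s (M1 - M2) = axis j0 1"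
    proof -
      have nz: "mu1 - mu2 \<noteq> 0" using ne by simp
      have one: "inverse (mu1 - mu2) * mu1 - inverse (mu1 - mu2) * mu2 = 1"
      proof -
        have "inverse (mu1 - mu2) * mu1 - inverse (mu1 - mu2) * mu2 = inverse (mu1 - mu2) * (mu1 - mu2)"
          by (simp only: right_diff_distrib)
        then show ?thesis using nz by simp
      qed
      show ?thesis unfolding M1_def M2_def using nz one by (auto simp: vec_eq_iff axis_def)
    qed
    ultimately show False using j0 by simp
  qed
  define \<sigma> where "\<sigma> = (\<lambda>lam. SOME mu. U mu lam \<noteq> 0)"
  have sig: "U (\<sigma> lam) lam \<noteq> 0" for lam unfolding \<sigma>_def by (rule someI_ex[OF Uex])
  have sigU: "U mu lam \<noteq> 0 \<Longrightarrow> mu = \<sigma> lam" for mu lam using Uuniq sig by blast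
  have c0: "complex_of_real (1 / sqrt (real N)) \<noteq> 0" using N0 by simp
  have stepF: "\<exists>w. \<forall>x\<in>C. G lam x = w * H (\<sigma> lam) x" for lam
  proof -
    define L where "L = Lof lam"
    have LD: "L \<in> D" unfolding L_def by (rule LofD)
    have Lj: "L $ j0 = lam" unfolding L_def by (rule Lofj)
    obtain a where a: "Phi N C G L = (\<lambda>X. \<Sum>M\<in>D. a M * Phi N C H M X)"
      using stepA[OF LD] by blast
    define Msig where "Msig = (\<chi> j. \<sigma> (L$j))"
    have aM: "a M = (\<Prod>j\<in>UNIV. U (M$j) (L$j))" if "M \<in> D" for M
      using coef[OF a, of M] UP that by simp
    have aM0: "a M = 0" if MD: "M \<in> D" and MnMsig: "M \<noteq> Msig" for M
    proof -
      obtain j where "M $ j \<noteq> \<sigma> (L$j)" using MnMsig unfolding Msig_def by (auto simp: vec_eq_iff)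
      then have "U (M$j) (L$j) = 0" using sigU by blast
      then show ?thesis unfolding aM[OF MD] by (simp add: prod_zero_iff) blast
    qed
    define \<alpha> where "\<alpha> = (if Msig \<in> D then a Msig else 0)"
    have al: "Phi N C G L X = \<alpha> * Phi N C H Msig X" for X
    proof -
      have "Phi N C G L X = (\<Sum>M\<in>D. a M * Phi N C H M X)" by (simp add: a)
      also have "\<dots> = (\<Sum>M\<in>D. (if M = Msig then a Msig * Phi N C H Msig X else 0))"
      proof (rule sum.cong[OF refl])
        fix M assume MD: "M \<in> D"
        show "a M * Phi N C H M X = (if M = Msig then a Msig * Phi N C H Msig X else 0)"
          by (cases "M = Msig") (simp_all add: aM0[OF MD])
      qed
      also have "\<dots> = (if Msig \<in> D then a Msig * Phi N C H Msig X else 0)"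
        by (rule sum.delta[OF fD])
      also have "\<dots> = \<alpha> * Phi N C H Msig X" by (simp add: \<alpha>_def)
      finally show ?thesis .
    qed
    define X0 where "X0 = (\<lambda>x::'a^'n. \<lambda>j::'m. if j = j0 then x else 0)"
    have split: "Phi N C K Q (X0 x) = phi N C K (Q$j0) x * (\<Prod>j\<in>UNIV-{j0}. phi N C K (Q$j) 0)" for K :: "'b \<Rightarrow> 'a^'n \<Rightarrow> complex" and Q :: "'b^'m" and x
      unfolding Phi_def X0_def
      by (subst prod.remove[of UNIV j0]) (auto intro!: prod.cong)
    define PG where "PG = (\<Prod>j\<in>UNIV-{j0}. phi N C G (L$j) 0)"
    define PH where "PH = (\<Prod>j\<in>UNIV-{j0}. phi N C H (Msig$j) 0)"
    have "PG \<noteq> 0" unfolding PG_def phi_def using C0 c0 BH_nz[OF BG p0 C0]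
      by (simp add: prod_zero_iff)
    have "G lam x = (\<alpha> * PH / PG) * H (\<sigma> lam) x" if "x \<in> C" for x
    proof -
      have "phi N C G lam x * PG = \<alpha> * (phi N C H (\<sigma> lam) x * PH)"
        using al[of "X0 x"] unfolding split PG_def PH_def using Lj by (simp add: Msig_def)
      then have "complex_of_real (1 / sqrt (real N)) * (G lam x * PG) = complex_of_real (1 / sqrt (real N)) * (\<alpha> * PH * H (\<sigma> lam) x)"
        using that unfolding phi_def by (simp add: mult_ac)
      then have "G lam x * PG = \<alpha> * PH * H (\<sigma> lam) x" using c0 by simp
      then show ?thesis using \<open>PG \<noteq> 0\<close> by (simp add: field_simps)
    qed
    then show ?thesis by blast
  qed
  then obtain w where w: "\<And>lam x. x \<in> C \<Longrightarrow> G lam x = w lam * H (\<sigma> lam) x"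
    by metis
  have wp: "w lam ^ p = 1" for lam
  proof -
    have "G lam 0 ^ p = w lam ^ p * H (\<sigma> lam) 0 ^ p" using w[OF C0] by (simp add: power_mult_distrib)
    then show ?thesis using BH BG C0 unfolding is_BH_def by simp
  qed
  have wnz: "w lam \<noteq> 0" for lam
  proof
    assume "w lam = 0" then have "w lam ^ p = 0" using p0 by simp
    then show False using wp[of lam] by simp
  qed
  have inj: "inj \<sigma>"
  proof (rule injI, rule ccontr)
    fix l1 l2 assume eq: "\<sigma> l1 = \<sigma> l2" and ne: "l1 \<noteq> l2"
    have "(\<Sum>c\<in>C. G l1 c * cnj (G l2 c)) = 0" using BG ne unfolding is_BH_def by simp
    moreover have "(\<Sum>c\<in>C. G l1 c * cnj (G l2 c)) = w l1 * cnj (w l2) * (\<Sum>c\<in>C. H (\<sigma> l1) c * cnj (H (\<sigma> l1) c))"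
      using w eq by (simp add: sum_distrib_left mult_ac)
    moreover have "(\<Sum>c\<in>C. H (\<sigma> l1) c * cnj (H (\<sigma> l1) c)) = of_nat N" using BH unfolding is_BH_def by simp
    ultimately show False using wnz N0 by simp
  qed
  have "bij \<sigma>" using inj finite_UNIV_inj_surj[of \<sigma>] by (simp add: bij_def)
  then show ?thesis unfolding row_equiv_def using wp w by blast
qed


theorem proposition2p4:
  fixes p r q k n :: nat
    and C :: "('a::{field,finite}^'n) set"
    and H H' :: "'b::{field,finite} \<Rightarrow> 'a^'n \<Rightarrow> complex"
  assumes "prime p" and "r \<ge> 1" and "q = p ^ r"
    and "CARD('a) = q" and "CARD('b) = q ^ k"
    and "linear_code C k"
    and "is_BH (q ^ k) p C H" and "is_BH (q ^ k) p C H'"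
  shows "(\<forall>(D :: ('b^'m::finite) set) s.
            linear_code D s \<and> 0 < s \<and> s < CARD('m) \<and> (\<forall>i. \<exists>d\<in>D. d $ i = 1) \<and>
            QH (q ^ k) C H D = QH (q ^ k) C H' D
            \<longrightarrow> row_equiv p C H H')
       \<and> (row_equiv p C H H' \<longrightarrow>
            QH (q ^ k) C H (range (vec :: 'b \<Rightarrow> 'b^'m)) = QH (q ^ k) C H' (range vec))"
proof (intro conjI allI impI)
  have p0: "p > 0" using assms(1) prime_gt_0_nat by blast
  have N0: "q ^ k > 0" using p0 assms(3) by simp
  have C0: "0 \<in> C" using assms(6) unfolding linear_code_def using vec.subspace_0 by blast
  fix D :: "('b^'m::finite) set" and s
  assume h: "linear_code D s \<and> 0 < s \<and> s < CARD('m) \<and> (\<forall>i. \<exists>d\<in>D. d $ i = 1) \<and>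
            QH (q ^ k) C H D = QH (q ^ k) C H' D"
  have Dsub: "vec.subspace D" and Ddim: "vec.dim D < CARD('m)"
    using h unfolding linear_code_def by auto
  show "row_equiv p C H H'"
    using part1[OF N0 assms(1) C0 assms(7) assms(8) Dsub Ddim] h by blast
next
  assume "row_equiv p C H H'"
  then show "QH (q ^ k) C H (range (vec :: 'b \<Rightarrow> 'b^'m)) = QH (q ^ k) C H' (range vec)"
    by (rule part2[OF assms(1)])
qed

end
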